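(* Let $G=(V,E,L)$ be a graph with loops and let $V^+:=\{i\in V:\{i,i\}\in L^+\}$. If $V^+$ is a stable set of the graph $(V,E)$, then $\mathrm{QP}(G)$ is second-order cone (SOC) representable.
   Context: A graph with loops is a triple $G=(V,E,L)$ where $V$ is a finite node set, $E$ is a set of unordered pairs $\{i,j\}$ of distinct nodes, and $L$ is a set of loops, each written $\{i,i\}$ for some $i\in V$ (at most one per node), partitioned as $L=L^-\cup L^+$ into minus loops and plus loops. Define $$\mathrm{QP}(G):=\mathrm{conv}\Big\{z\in\mathbb{R}^{V\cup E\cup L}: z_{ii}\ge z_i^2\ \forall\{i,i\}\in L^+,\ z_{ii}\le z_i^2\ \forall \{i,i\}\in L^-,\ z_{ij}=z_iz_j\ \forall \{i,j\}\in E,\ z_i\in[0,1]\ \forall i\in V\Big\}.$$ A convex set is SOC-representable if it is the projection of a set (in a possibly higher-dimensional space) described by finitely many linear equalities/inequalities and (rotated) second-order cone constraints composed with affine maps. *)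

theory Defs
  imports "HOL-Analysis.Analysis"
begin

text \<open>Graph with loops G = (V, E, L), L = Lminus \<union> Lplus.  A loop {i,i} is identified
  with its node i; Lminus and Lplus are the node sets carrying a minus/plus loop.\<close>

definition graph_with_loops :: "'v set \<Rightarrow> 'v set set \<Rightarrow> 'v set \<Rightarrow> 'v set \<Rightarrow> bool" where
  "graph_with_loops V E Lminus Lplus \<longleftrightarrow>
     finite V \<and> (\<forall>e\<in>E. \<exists>i j. i \<in> V \<and> j \<in> V \<and> i \<noteq> j \<and> e = {i, j}) \<and>
     Lminus \<subseteq> V \<and> Lplus \<subseteq> V \<and> Lminus \<inter> Lplus = {}"

datatype 'v coord = Nd 'v | Ed "'v set" | Lp 'v

definition coords :: "'v set \<Rightarrow> 'v set set \<Rightarrow> 'v set \<Rightarrow> 'v set \<Rightarrow> 'v coord set" where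
  "coords V E Lminus Lplus = Nd ` V \<union> Ed ` E \<union> Lp ` (Lminus \<union> Lplus)"

text \<open>Points of R^I are functions vanishing outside the finite index set I.\<close>
definition supported_on :: "'i set \<Rightarrow> ('i \<Rightarrow> real) \<Rightarrow> bool" where
  "supported_on I z \<longleftrightarrow> (\<forall>i. i \<notin> I \<longrightarrow> z i = 0)"

definition conv_hull :: "('i \<Rightarrow> real) set \<Rightarrow> ('i \<Rightarrow> real) set" where
  "conv_hull X = {z. \<exists>(n::nat) (l::nat \<Rightarrow> real) (x::nat \<Rightarrow> 'i \<Rightarrow> real).
      (\<forall>t<n. 0 \<le> l t \<and> x t \<in> X) \<and> (\<Sum>t<n. l t) = 1 \<and> z = (\<lambda>i. \<Sum>t<n. l t * x t i)}"

definition QP_set :: "'v set \<Rightarrow> 'v set set \<Rightarrow> 'v set \<Rightarrow> 'v set \<Rightarrow> ('v coord \<Rightarrow> real) set" where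
  "QP_set V E Lminus Lplus = {z. supported_on (coords V E Lminus Lplus) z \<and>
      (\<forall>i\<in>Lplus. z (Lp i) \<ge> (z (Nd i))\<^sup>2) \<and>
      (\<forall>i\<in>Lminus. z (Lp i) \<le> (z (Nd i))\<^sup>2) \<and>
      (\<forall>e\<in>E. \<forall>i j. e = {i, j} \<and> i \<noteq> j \<longrightarrow> z (Ed e) = z (Nd i) * z (Nd j)) \<and>
      (\<forall>i\<in>V. 0 \<le> z (Nd i) \<and> z (Nd i) \<le> 1)}"

definition QP :: "'v set \<Rightarrow> 'v set set \<Rightarrow> 'v set \<Rightarrow> 'v set \<Rightarrow> ('v coord \<Rightarrow> real) set" where
  "QP V E Lminus Lplus = conv_hull (QP_set V E Lminus Lplus)"

text \<open>An affine functional on R^I \<times> R^k, given by coefficients (a, b, c):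
  (z, w) \<mapsto> \<Sum>i\<in>I. a i * z i + \<Sum>j<k. b j * w j + c.\<close>
type_synonym 'i affine_fn = "('i \<Rightarrow> real) \<times> (nat \<Rightarrow> real) \<times> real"

definition aff_eval :: "'i set \<Rightarrow> nat \<Rightarrow> 'i affine_fn \<Rightarrow> ('i \<Rightarrow> real) \<Rightarrow> (nat \<Rightarrow> real) \<Rightarrow> real" where
  "aff_eval I k f z w = (\<Sum>i\<in>I. fst f i * z i) + (\<Sum>j<k. fst (snd f) j * w j) + snd (snd f)"

text \<open>Linear inequalities (gs = []) and equalities (two inequalities) are special cases;
  rotated SOC constraints are SOC constraints composed with an affine map.\<close>
definition soc_holds :: "'i set \<Rightarrow> nat \<Rightarrow> ('i affine_fn list \<times> 'i affine_fn) \<Rightarrow> ('i \<Rightarrow> real) \<Rightarrow> (nat \<Rightarrow> real) \<Rightarrow> bool" where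
  "soc_holds I k C z w \<longleftrightarrow> sqrt (\<Sum>g\<leftarrow>fst C. (aff_eval I k g z w)\<^sup>2) \<le> aff_eval I k (snd C) z w"

definition soc_representable :: "'i set \<Rightarrow> ('i \<Rightarrow> real) set \<Rightarrow> bool" where
  "soc_representable I S \<longleftrightarrow>
     (\<exists>(k::nat) (Cs :: ('i affine_fn list \<times> 'i affine_fn) set). finite Cs \<and>
        S = {z. supported_on I z \<and> (\<exists>w. \<forall>C\<in>Cs. soc_holds I k C z w)})"

definition stable_set :: "'v set \<Rightarrow> 'v set set \<Rightarrow> 'v set \<Rightarrow> bool" where
  "stable_set V E S \<longleftrightarrow> S \<subseteq> V \<and> (\<forall>i\<in>S. \<forall>j\<in>S. {i, j} \<notin> E)"

end

theory Submission
  imports Defs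
begin

definition gev :: "'i set \<Rightarrow> 'a set \<Rightarrow> (('i\<Rightarrow>real)\<times>('a\<Rightarrow>real)\<times>real) \<Rightarrow> ('i\<Rightarrow>real) \<Rightarrow> ('a\<Rightarrow>real) \<Rightarrow> real" where
  "gev I A f z u = (\<Sum>i\<in>I. fst f i * z i) + (\<Sum>x\<in>A. fst (snd f) x * u x) + snd (snd f)"

definition is_aff :: "'i set \<Rightarrow> 'a set \<Rightarrow> (('i\<Rightarrow>real) \<Rightarrow> ('a\<Rightarrow>real) \<Rightarrow> real) \<Rightarrow> bool" where
  "is_aff I A \<phi> \<longleftrightarrow> (\<exists>f. \<forall>z u. \<phi> z u = gev I A f z u)"

definition sholds :: "((('i\<Rightarrow>real) \<Rightarrow> ('a\<Rightarrow>real) \<Rightarrow> real) list \<times> (('i\<Rightarrow>real) \<Rightarrow> ('a\<Rightarrow>real) \<Rightarrow> real)) \<Rightarrow> ('i\<Rightarrow>real) \<Rightarrow> ('a\<Rightarrow>real) \<Rightarrow> bool" where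
  "sholds C z u \<longleftrightarrow> sqrt (\<Sum>g\<leftarrow>fst C. (g z u)\<^sup>2) \<le> snd C z u"

lemma aff_const: "is_aff I A (\<lambda>z u. c)"
  unfolding is_aff_def gev_def
  by (rule exI[of _ "(\<lambda>_. 0, \<lambda>_. 0, c)"]) simp

lemma aff_z: assumes "finite I" "c \<in> I" shows "is_aff I A (\<lambda>z u. z c)"
  unfolding is_aff_def gev_def
  by (rule exI[of _ "(\<lambda>i. if i = c then 1 else 0, \<lambda>_. 0, 0)"]) (simp add: assms if_distrib[of "\<lambda>a. a * _"] cong: if_cong)

lemma aff_u: assumes "finite A" "x \<in> A" shows "is_aff I A (\<lambda>z u. u x)"
  unfolding is_aff_def gev_def
  by (rule exI[of _ "(\<lambda>_. 0, \<lambda>i. if i = x then 1 else 0, 0)"]) (simp add: assms if_distrib[of "\<lambda>a. a * _"] cong: if_cong)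

lemma aff_add: assumes "is_aff I A \<phi>" "is_aff I A \<psi>" shows "is_aff I A (\<lambda>z u. \<phi> z u + \<psi> z u)"
proof -
  obtain f where f: "\<And>z u. \<phi> z u = gev I A f z u" using assms(1) unfolding is_aff_def by blast
  obtain g where g: "\<And>z u. \<psi> z u = gev I A g z u" using assms(2) unfolding is_aff_def by blast
  show ?thesis unfolding is_aff_def
    by (rule exI[of _ "(\<lambda>i. fst f i + fst g i, \<lambda>x. fst (snd f) x + fst (snd g) x, snd (snd f) + snd (snd g))"])
       (simp add: f g gev_def distrib_right sum.distrib)
qed

lemma aff_scale: assumes "is_aff I A \<phi>" shows "is_aff I A (\<lambda>z u. r * \<phi> z u)"
proof -
  obtain f where f: "\<And>z u. \<phi> z u = gev I A f z u" using assms(1) unfolding is_aff_def by blast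
  show ?thesis unfolding is_aff_def
    by (rule exI[of _ "(\<lambda>i. r * fst f i, \<lambda>x. r * fst (snd f) x, r * snd (snd f))"])
       (simp add: f gev_def distrib_left sum_distrib_left mult.assoc)
qed

lemma aff_diff: assumes "is_aff I A \<phi>" "is_aff I A \<psi>" shows "is_aff I A (\<lambda>z u. \<phi> z u - \<psi> z u)"
  using aff_add[OF assms(1) aff_scale[OF assms(2), of "-1"]] by simp

lemma aff_sum: assumes "finite F" "\<And>k. k \<in> F \<Longrightarrow> is_aff I A (\<phi> k)"
  shows "is_aff I A (\<lambda>z u. \<Sum>k\<in>F. \<phi> k z u)"
  using assms
proof (induction F rule: finite_induct)
  case empty then show ?case using aff_const[of I A 0] by simp
next
  case (insert x F)
  then show ?case using aff_add[of I A "\<phi> x" "\<lambda>z u. \<Sum>k\<in>F. \<phi> k z u"] by simp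
qed

lemma transfer_rep:
  fixes I :: "'i set" and A :: "'a set"
  assumes fI: "finite I" and fA: "finite A" and fC: "finite Cs"
    and aff: "\<And>C. C \<in> Cs \<Longrightarrow> (\<forall>g\<in>set (fst C). is_aff I A g) \<and> is_aff I A (snd C)"
  shows "soc_representable I {z. supported_on I z \<and> (\<exists>u. \<forall>C\<in>Cs. sholds C z u)}"
proof -
  define k where "k = card A"
  obtain h where h: "bij_betw h {0..<k} A" using ex_bij_betw_nat_finite[OF fA] k_def by blast
  define coef where "coef \<phi> = (SOME f. \<forall>z u. \<phi> z u = gev I A f z u)" for \<phi> :: "('i\<Rightarrow>real) \<Rightarrow> ('a\<Rightarrow>real) \<Rightarrow> real"
  have coef: "\<phi> z u = gev I A (coef \<phi>) z u" if "is_aff I A \<phi>" for \<phi> z u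
  proof -
    from that obtain f where "\<forall>z u. \<phi> z u = gev I A f z u" unfolding is_aff_def by blast
    hence "\<forall>z u. \<phi> z u = gev I A (coef \<phi>) z u" unfolding coef_def by (rule someI)
    thus ?thesis by blast
  qed
  define tra where "tra f = (fst f, \<lambda>j. fst (snd f) (h j), snd (snd f))"
    for f :: "('i\<Rightarrow>real)\<times>('a\<Rightarrow>real)\<times>real"
  have key: "aff_eval I k (tra f) z w = gev I A f z u" if rel: "\<forall>j<k. w j = u (h j)" for f z w u
  proof -
    have "(\<Sum>j<k. fst (snd f) (h j) * w j) = (\<Sum>j\<in>{0..<k}. fst (snd f) (h j) * u (h j))"
      using rel by (simp add: lessThan_atLeast0)
    also have "\<dots> = (\<Sum>x\<in>A. fst (snd f) x * u x)"
      using sum.reindex_bij_betw[OF h, of "\<lambda>x. fst (snd f) x * u x"] by simp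
    finally show ?thesis unfolding aff_eval_def gev_def tra_def by simp
  qed
  define trC where "trC C = (map (tra \<circ> coef) (fst C), tra (coef (snd C)))"
    for C :: "(('i\<Rightarrow>real) \<Rightarrow> ('a\<Rightarrow>real) \<Rightarrow> real) list \<times> (('i\<Rightarrow>real) \<Rightarrow> ('a\<Rightarrow>real) \<Rightarrow> real)"
  have equiv: "soc_holds I k (trC C) z w \<longleftrightarrow> sholds C z u"
    if C: "C \<in> Cs" and rel: "\<forall>j<k. w j = u (h j)" for C z w u
  proof -
    have s1: "(\<Sum>g\<leftarrow>map (tra \<circ> coef) (fst C). (aff_eval I k g z w)\<^sup>2) = (\<Sum>g\<leftarrow>fst C. (g z u)\<^sup>2)"
      unfolding map_map by (intro arg_cong[where f=sum_list] map_cong) (use aff[OF C] in \<open>auto simp: key[OF rel] coef\<close>)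
    have s2: "aff_eval I k (tra (coef (snd C))) z w = snd C z u"
      using aff[OF C] by (auto simp: key[OF rel] coef)
    show ?thesis unfolding soc_holds_def sholds_def trC_def by (simp only: fst_conv snd_conv s1 s2)
  qed
  show ?thesis unfolding soc_representable_def
  proof (intro exI conjI)
    show "finite (trC ` Cs)" using fC by simp
    show "{z. supported_on I z \<and> (\<exists>u. \<forall>C\<in>Cs. sholds C z u)} =
      {z. supported_on I z \<and> (\<exists>w. \<forall>C\<in>trC ` Cs. soc_holds I k C z w)}"
    proof (intro Collect_cong conj_cong refl iffI)
      fix z assume "\<exists>u. \<forall>C\<in>Cs. sholds C z u"
      then obtain u where u: "\<forall>C\<in>Cs. sholds C z u" by blast
      have r: "\<forall>j<k. (\<lambda>j. u (h j)) j = u (h j)" by simp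
      show "\<exists>w. \<forall>C\<in>trC ` Cs. soc_holds I k C z w"
        by (rule exI[of _ "\<lambda>j. u (h j)"]) (use u equiv[OF _ r] in blast)
    next
      fix z assume "\<exists>w. \<forall>C\<in>trC ` Cs. soc_holds I k C z w"
      then obtain w where w: "\<forall>C\<in>trC ` Cs. soc_holds I k C z w" by blast
      define u where "u x = w (inv_into {0..<k} h x)" for x
      have r: "\<forall>j<k. w j = u (h j)"
        using h unfolding u_def bij_betw_def by (auto simp: inv_into_f_f)
      show "\<exists>u. \<forall>C\<in>Cs. sholds C z u" using w equiv[OF _ r] by blast
    qed
  qed
qed


definition pw :: "'v set \<Rightarrow> ('v \<Rightarrow> real) \<Rightarrow> 'v set \<Rightarrow> real" where
  "pw N a T = (\<Prod>m\<in>T. a m) * (\<Prod>m\<in>N - T. 1 - a m)"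

lemma pw_marg:
  assumes "finite N" "S \<subseteq> N"
  shows "(\<Sum>T\<in>Pow N. pw N a T * of_bool (S \<subseteq> T)) = (\<Prod>m\<in>S. a m)"
proof -
  define b where "b m = (if m \<in> S then 0 else 1 - a m)" for m
  have "(\<Sum>T\<in>Pow N. pw N a T * of_bool (S \<subseteq> T)) = (\<Sum>T\<in>Pow N. (\<Prod>m\<in>T. a m) * (\<Prod>m\<in>N - T. b m))"
  proof (rule sum.cong[OF refl])
    fix T assume T: "T \<in> Pow N"
    show "pw N a T * of_bool (S \<subseteq> T) = (\<Prod>m\<in>T. a m) * (\<Prod>m\<in>N - T. b m)"
    proof (cases "S \<subseteq> T")
      case True
      then have "(\<Prod>m\<in>N - T. b m) = (\<Prod>m\<in>N - T. 1 - a m)"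
        by (intro prod.cong) (auto simp: b_def)
      then show ?thesis using True by (simp add: pw_def)
    next
      case False
      then obtain m where "m \<in> S" "m \<notin> T" by blast
      then have "m \<in> N - T" "b m = 0" using assms by (auto simp: b_def)
      then have "(\<Prod>m\<in>N - T. b m) = 0" using assms(1) by (intro prod_zero) auto
      then show ?thesis using False by simp
    qed
  qed
  also have "\<dots> = (\<Prod>m\<in>N. a m + b m)" using prod_add[OF assms(1), of a b] by simp
  also have "\<dots> = (\<Prod>m\<in>N. if m \<in> S then a m else 1)" by (intro prod.cong) (auto simp: b_def)
  also have "\<dots> = (\<Prod>m\<in>{m\<in>N. m \<in> S}. a m)" using assms(1) by (simp add: prod.inter_filter)
  also have "{m\<in>N. m \<in> S} = S" using assms(2) by blast
  finally show ?thesis .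
qed

lemma pw_sum1: "finite N \<Longrightarrow> (\<Sum>T\<in>Pow N. pw N a T) = 1"
  using pw_marg[of N "{}" a] by simp

lemma pw_marg1: "finite N \<Longrightarrow> n \<in> N \<Longrightarrow> (\<Sum>T\<in>Pow N. pw N a T * of_bool (n \<in> T)) = a n"
  using pw_marg[of N "{n}" a] by simp

lemma pw_marg2: "finite N \<Longrightarrow> i \<in> N \<Longrightarrow> j \<in> N \<Longrightarrow> i \<noteq> j \<Longrightarrow>
    (\<Sum>T\<in>Pow N. pw N a T * of_bool ({i,j} \<subseteq> T)) = a i * a j"
  using pw_marg[of N "{i,j}" a] by simp

lemma pw_nonneg: "(\<And>m. m \<in> N \<Longrightarrow> 0 \<le> a m \<and> a m \<le> 1) \<Longrightarrow> T \<subseteq> N \<Longrightarrow> 0 \<le> pw N a T"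
  unfolding pw_def
  by (intro mult_nonneg_nonneg prod_nonneg) auto

lemma weighted_CS:
  fixes w x :: "'a \<Rightarrow> real"
  assumes "\<And>t. t \<in> F \<Longrightarrow> 0 \<le> w t"
  shows "(\<Sum>t\<in>F. w t * x t)\<^sup>2 \<le> (\<Sum>t\<in>F. w t) * (\<Sum>t\<in>F. w t * (x t)\<^sup>2)"
proof -
  have "(\<Sum>t\<in>F. sqrt (w t) * (sqrt (w t) * x t))\<^sup>2 \<le> (\<Sum>t\<in>F. (sqrt (w t))\<^sup>2) * (\<Sum>t\<in>F. (sqrt (w t) * x t)\<^sup>2)"
    by (rule Cauchy_Schwarz_ineq_sum)
  moreover have "(\<Sum>t\<in>F. sqrt (w t) * (sqrt (w t) * x t)) = (\<Sum>t\<in>F. w t * x t)"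
    using assms by (intro sum.cong) (auto simp flip: mult.assoc)
  moreover have "(\<Sum>t\<in>F. (sqrt (w t))\<^sup>2) = (\<Sum>t\<in>F. w t)"
    using assms by (intro sum.cong) auto
  moreover have "(\<Sum>t\<in>F. (sqrt (w t) * x t)\<^sup>2) = (\<Sum>t\<in>F. w t * (x t)\<^sup>2)"
    using assms by (intro sum.cong) (auto simp: power_mult_distrib)
  ultimately show ?thesis by simp
qed

lemma cone_iff:
  fixes X L Y :: real
  shows "sqrt ((2 * X)\<^sup>2 + (L - Y)\<^sup>2) \<le> L + Y \<longleftrightarrow> X\<^sup>2 \<le> L * Y \<and> 0 \<le> L + Y"
proof
  assume h: "sqrt ((2 * X)\<^sup>2 + (L - Y)\<^sup>2) \<le> L + Y"
  have "0 \<le> L + Y" using h real_sqrt_ge_zero[of "(2 * X)\<^sup>2 + (L - Y)\<^sup>2"] by (smt (verit) zero_le_power2)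
  moreover have "(2 * X)\<^sup>2 + (L - Y)\<^sup>2 \<le> (L + Y)\<^sup>2" using h
    using real_le_rsqrt sqrt_le_D by blast
  ultimately show "X\<^sup>2 \<le> L * Y \<and> 0 \<le> L + Y" by (simp add: power2_eq_square algebra_simps)
next
  assume h: "X\<^sup>2 \<le> L * Y \<and> 0 \<le> L + Y"
  have "(2 * X)\<^sup>2 + (L - Y)\<^sup>2 \<le> (L + Y)\<^sup>2" using h by (simp add: power2_eq_square algebra_simps)
  then show "sqrt ((2 * X)\<^sup>2 + (L - Y)\<^sup>2) \<le> L + Y" using h real_le_lsqrt by blast
qed


definition vv :: "'v set \<Rightarrow> 'v set \<Rightarrow> ('v coord \<Rightarrow> real) \<Rightarrow> 'v set \<Rightarrow> 'v coord \<Rightarrow> real" where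
  "vv N P y T c = (case c of Nd i \<Rightarrow> if i \<in> N then of_bool (i \<in> T) else y (Nd i)
     | Ed e \<Rightarrow> if e \<inter> P = {} then of_bool (e \<subseteq> T) else (\<Sum>p\<in>e \<inter> P. y (Nd p) * of_bool (e - {p} \<subseteq> T))
     | Lp i \<Rightarrow> if i \<in> N then of_bool (i \<in> T) - y (Nd i) + y (Lp i) else y (Lp i))"

locale qpG =
  fixes V :: "'v set" and E :: "'v set set" and Lminus Lplus :: "'v set"
  assumes graph: "graph_with_loops V E Lminus Lplus"
    and stable: "stable_set V E Lplus"
begin

abbreviation "N \<equiv> V - Lplus"
abbreviation "I \<equiv> coords V E Lminus Lplus"

lemmas gr0 = graph[unfolded graph_with_loops_def]
lemmas gr = conjunct1[OF gr0] conjunct1[OF conjunct2[OF gr0]] conjunct1[OF conjunct2[OF conjunct2[OF gr0]]]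
  conjunct1[OF conjunct2[OF conjunct2[OF conjunct2[OF gr0]]]] conjunct2[OF conjunct2[OF conjunct2[OF conjunct2[OF gr0]]]]
lemma finV: "finite V" by (rule gr(1))
lemma finN: "finite N" using finV by simp
lemma edge: "e \<in> E \<Longrightarrow> \<exists>i j. i \<in> V \<and> j \<in> V \<and> i \<noteq> j \<and> e = {i,j}"
  using gr(2) by (rule bspec)
lemma EsubPow: "E \<subseteq> Pow V"
proof
  fix e assume "e \<in> E"
  then obtain i j where "i \<in> V" "j \<in> V" "e = {i,j}" using edge by blast
  then show "e \<in> Pow V" by simp
qed
lemma finE: "finite E" using finite_subset[OF EsubPow] finV by simp
lemma finI: "finite I" unfolding coords_def using finV finE finite_subset[OF gr(3) finV] finite_subset[OF gr(4) finV]
  by simp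
lemma edge_V: "{i,j} \<in> E \<Longrightarrow> i \<in> V \<and> j \<in> V" using EsubPow by auto
lemma Lm_N: "Lminus \<subseteq> N" using gr(3,5) by auto
lemma Lp_V: "Lplus \<subseteq> V" by (rule gr(4))
lemma stab: "i \<in> Lplus \<Longrightarrow> j \<in> Lplus \<Longrightarrow> {i,j} \<notin> E" using stable unfolding stable_set_def by auto

lemma edge_P:
  assumes "e \<in> E" "p \<in> e \<inter> Lplus"
  obtains j where "j \<in> N" "j \<noteq> p" "e = {p,j}" "e \<inter> Lplus = {p}" "e - {p} = {j}"
proof -
  obtain i j where ij: "i \<in> V" "j \<in> V" "i \<noteq> j" "e = {i,j}" using edge[OF assms(1)] by blast
  show ?thesis
  proof (cases "p = i")
    case True
    then have "j \<notin> Lplus" using stab[of i j] assms ij by auto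
    then show ?thesis using that[of j] ij True assms by auto
  next
    case False
    then have "p = j" using assms ij by auto
    then have "i \<notin> Lplus" using stab[of i j] assms ij by auto
    then show ?thesis using that[of i] ij \<open>p = j\<close> assms by auto
  qed
qed

lemma I_cases:
  assumes "c \<in> I"
  obtains (nd) i where "c = Nd i" "i \<in> V" | (ed) e where "c = Ed e" "e \<in> E"
    | (lp) i where "c = Lp i" "i \<in> Lminus \<union> Lplus"
proof -
  have "c \<in> Nd ` V \<or> c \<in> Ed ` E \<or> c \<in> Lp ` (Lminus \<union> Lplus)" using assms unfolding coords_def by simp
  then show ?thesis
  proof (elim disjE)
    assume "c \<in> Nd ` V" then obtain i where "c = Nd i" "i \<in> V" by (elim imageE)
    then show ?thesis by (rule that(1))
  next
    assume "c \<in> Ed ` E" then obtain e where "c = Ed e" "e \<in> E" by (elim imageE)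
    then show ?thesis by (rule that(2))
  next
    assume "c \<in> Lp ` (Lminus \<union> Lplus)" then obtain i where "c = Lp i" "i \<in> Lminus \<union> Lplus" by (elim imageE)
    then show ?thesis by (rule that(3))
  qed
qed

lemma vv_marg:
  assumes y: "y \<in> QP_set V E Lminus Lplus" and c: "c \<in> I"
  shows "(\<Sum>T\<in>Pow N. pw N (\<lambda>m. y (Nd m)) T * vv N Lplus y T c) = y c"
proof -
  let ?a = "\<lambda>m. y (Nd m)"
  have s1: "(\<Sum>T\<in>Pow N. pw N ?a T) = 1" using pw_sum1[OF finN] .
  have yE: "\<And>e i j. e \<in> E \<Longrightarrow> e = {i,j} \<Longrightarrow> i \<noteq> j \<Longrightarrow> y (Ed e) = y (Nd i) * y (Nd j)"
    using y unfolding QP_set_def by blast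
  from c show ?thesis
  proof (cases rule: I_cases)
    case (nd i)
    show ?thesis
    proof (cases "i \<in> N")
      case True then show ?thesis using nd pw_marg1[OF finN True, of ?a] by (simp add: vv_def)
    next
      case False
      then have "(\<Sum>T\<in>Pow N. pw N ?a T * vv N Lplus y T c) = (\<Sum>T\<in>Pow N. pw N ?a T) * y c"
        using nd by (simp add: vv_def sum_distrib_right)
      then show ?thesis using s1 by simp
    qed
  next
    case (ed e)
    obtain i j where ij: "i \<in> V" "j \<in> V" "i \<noteq> j" "e = {i,j}" using edge[OF ed(2)] by blast
    show ?thesis
    proof (cases "e \<inter> Lplus = {}")
      case True
      then have "i \<in> N" "j \<in> N" using ij by auto
      then show ?thesis using pw_marg2[OF finN \<open>i \<in> N\<close> \<open>j \<in> N\<close> ij(3), of ?a] True ed ij yE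
        by (simp add: vv_def)
    next
      case False
      then obtain p where p: "p \<in> e \<inter> Lplus" by blast
      obtain k where k: "k \<in> N" "k \<noteq> p" "e = {p,k}" "e \<inter> Lplus = {p}" "e - {p} = {k}"
        using edge_P[OF ed(2) p] by blast
      have vT: "vv N Lplus y T c = y (Nd p) * of_bool (k \<in> T)" for T
        using ed k by (simp add: vv_def)
      have "(\<Sum>T\<in>Pow N. pw N ?a T * vv N Lplus y T c) = y (Nd p) * (\<Sum>T\<in>Pow N. pw N ?a T * of_bool (k \<in> T))"
        unfolding vT sum_distrib_left by (simp add: mult_ac)
      also have "\<dots> = y (Nd p) * y (Nd k)" using pw_marg1[OF finN k(1)] by simp
      also have "\<dots> = y c" using yE[OF ed(2) k(3) k(2)[symmetric]] ed by simp
      finally show ?thesis .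
    qed
  next
    case (lp i)
    show ?thesis
    proof (cases "i \<in> N")
      case True
      have "(\<Sum>T\<in>Pow N. pw N ?a T * vv N Lplus y T c) =
         (\<Sum>T\<in>Pow N. pw N ?a T * of_bool (i \<in> T)) + (\<Sum>T\<in>Pow N. pw N ?a T) * (y (Lp i) - y (Nd i))"
      proof -
        have "pw N ?a T * vv N Lplus y T c = pw N ?a T * of_bool (i \<in> T) + pw N ?a T * (y (Lp i) - y (Nd i))" for T
          using lp True by (simp add: vv_def algebra_simps)
        then show ?thesis by (simp add: sum.distrib sum_distrib_left sum_distrib_right mult.commute)
      qed
      then show ?thesis using pw_marg1[OF finN True, of ?a] s1 lp by simp
    next
      case False
      then have nn: "\<not> (i \<in> V \<and> i \<notin> Lplus)" by blast
      have "vv N Lplus y T c = y c" for T using lp nn by (auto simp: vv_def)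
      then have "(\<Sum>T\<in>Pow N. pw N ?a T * vv N Lplus y T c) = (\<Sum>T\<in>Pow N. pw N ?a T) * y c"
        by (simp add: sum_distrib_right)
      then show ?thesis using s1 by simp
    qed
  qed
qed

lemma vv_Nd_P: "p \<in> Lplus \<Longrightarrow> vv N Lplus y T (Nd p) = y (Nd p)" by (simp add: vv_def)
lemma vv_Nd_N: "n \<in> N \<Longrightarrow> vv N Lplus y T (Nd n) = of_bool (n \<in> T)" by (simp add: vv_def)
lemma vv_Ed_P: "e \<in> E \<Longrightarrow> p \<in> e \<inter> Lplus \<Longrightarrow>
    vv N Lplus y T (Ed e) = of_bool (e - {p} \<subseteq> T) * vv N Lplus y T (Nd p)"
proof -
  assume a: "e \<in> E" "p \<in> e \<inter> Lplus"
  obtain j where j: "j \<in> N" "j \<noteq> p" "e = {p,j}" "e \<inter> Lplus = {p}" "e - {p} = {j}"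
    using edge_P[OF a] by blast
  have "p \<in> Lplus" using a by blast
  then show ?thesis using a j by (simp add: vv_def mult.commute)
qed
lemma vv_Ed_N: "e \<inter> Lplus = {} \<Longrightarrow> vv N Lplus y T (Ed e) = of_bool (e \<subseteq> T)" by (simp add: vv_def)
lemma vv_Lm:
  assumes y: "y \<in> QP_set V E Lminus Lplus" and n: "n \<in> Lminus"
  shows "vv N Lplus y T (Lp n) \<le> of_bool (n \<in> T)"
proof -
  have nN: "n \<in> N" "n \<in> V" using n Lm_N by auto
  have "y (Lp n) \<le> (y (Nd n))\<^sup>2" "0 \<le> y (Nd n)" "y (Nd n) \<le> 1" using y n nN unfolding QP_set_def by auto
  moreover have "(y (Nd n))\<^sup>2 \<le> y (Nd n)" using calculation(2,3) by (simp add: power2_eq_square mult_left_le)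
  ultimately show ?thesis using nN by (simp add: vv_def)
qed
lemma vv_Lp:
  assumes y: "y \<in> QP_set V E Lminus Lplus" and p: "p \<in> Lplus"
  shows "vv N Lplus y T (Lp p) = y (Lp p)" "(y (Nd p))\<^sup>2 \<le> y (Lp p)"
  using assms unfolding QP_set_def by (auto simp: vv_def)

end

lemma aff_neg: "is_aff I A \<phi> \<Longrightarrow> is_aff I A (\<lambda>z u. - \<phi> z u)"
  using aff_scale[of I A \<phi> "-1"] by simp

lemma sholds_lin: "sholds ([], \<phi>) z u \<longleftrightarrow> 0 \<le> \<phi> z u"
  by (simp add: sholds_def)

context qpG
begin

abbreviation "AA \<equiv> Pow N \<times> insert None (Some ` I)"

definition Ineqs :: "(('v coord \<Rightarrow> real) \<Rightarrow> ('v set \<times> 'v coord option \<Rightarrow> real) \<Rightarrow> real) set" where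
  "Ineqs = (\<Union>T\<in>Pow N. {\<lambda>z u. u (T,None)})
    \<union> (\<Union>T\<in>Pow N. \<Union>p\<in>Lplus. {\<lambda>z u. u (T, Some (Nd p)), \<lambda>z u. u (T,None) - u (T, Some (Nd p))})
    \<union> (\<Union>T\<in>Pow N. \<Union>n\<in>Lminus. {\<lambda>z u. of_bool (n \<in> T) * u (T,None) - u (T, Some (Lp n))})"

definition Eqs :: "(('v coord \<Rightarrow> real) \<Rightarrow> ('v set \<times> 'v coord option \<Rightarrow> real) \<Rightarrow> real) set" where
  "Eqs = {\<lambda>z u. (\<Sum>T\<in>Pow N. u (T,None)) - 1}
    \<union> (\<Union>c\<in>I. {\<lambda>z u. z c - (\<Sum>T\<in>Pow N. u (T, Some c))})
    \<union> (\<Union>T\<in>Pow N. \<Union>n\<in>N. {\<lambda>z u. u (T,Some (Nd n)) - of_bool (n \<in> T) * u (T,None)})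
    \<union> (\<Union>T\<in>Pow N. \<Union>e\<in>E. \<Union>p\<in>e \<inter> Lplus. {\<lambda>z u. u (T,Some (Ed e)) - of_bool (e - {p} \<subseteq> T) * u (T, Some (Nd p))})
    \<union> (\<Union>T\<in>Pow N. \<Union>e\<in>{e\<in>E. e \<inter> Lplus = {}}. {\<lambda>z u. u (T,Some (Ed e)) - of_bool (e \<subseteq> T) * u (T,None)})"

definition Cones where
  "Cones = (\<Union>T\<in>Pow N. \<Union>p\<in>Lplus. {([\<lambda>z u. 2 * u (T,Some (Nd p)), \<lambda>z u. u (T,None) - u (T,Some (Lp p))],
       \<lambda>z u. u (T,None) + u (T,Some (Lp p)))})"

definition Cs where
  "Cs = (\<lambda>\<phi>. ([],\<phi>)) ` Ineqs \<union> (\<lambda>\<phi>. ([],\<phi>)) ` Eqs \<union> (\<lambda>\<phi>. ([], \<lambda>z u. - \<phi> z u)) ` Eqs \<union> Cones"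

definition Sem :: "('v coord \<Rightarrow> real) \<Rightarrow> ('v set \<times> 'v coord option \<Rightarrow> real) \<Rightarrow> bool" where
  "Sem z u \<longleftrightarrow>
   (\<forall>T\<in>Pow N. 0 \<le> u (T,None)) \<and>
   (\<forall>T\<in>Pow N. \<forall>p\<in>Lplus. 0 \<le> u (T,Some (Nd p)) \<and> u (T,Some (Nd p)) \<le> u (T,None)) \<and>
   (\<forall>T\<in>Pow N. \<forall>n\<in>Lminus. u (T,Some (Lp n)) \<le> of_bool (n \<in> T) * u (T,None)) \<and>
   (\<Sum>T\<in>Pow N. u (T,None)) = 1 \<and>
   (\<forall>c\<in>I. z c = (\<Sum>T\<in>Pow N. u (T,Some c))) \<and>
   (\<forall>T\<in>Pow N. \<forall>n\<in>N. u (T,Some (Nd n)) = of_bool (n \<in> T) * u (T,None)) \<and>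
   (\<forall>T\<in>Pow N. \<forall>e\<in>E. \<forall>p\<in>e \<inter> Lplus. u (T,Some (Ed e)) = of_bool (e - {p} \<subseteq> T) * u (T,Some (Nd p))) \<and>
   (\<forall>T\<in>Pow N. \<forall>e\<in>{e\<in>E. e \<inter> Lplus = {}}. u (T,Some (Ed e)) = of_bool (e \<subseteq> T) * u (T,None)) \<and>
   (\<forall>T\<in>Pow N. \<forall>p\<in>Lplus. (u (T,Some (Nd p)))\<^sup>2 \<le> u (T,None) * u (T,Some (Lp p)) \<and> 0 \<le> u (T,None) + u (T,Some (Lp p)))"

lemma Cs_split: "(\<forall>C\<in>Cs. sholds C z u) \<longleftrightarrow>
   (\<forall>\<phi>\<in>Ineqs. 0 \<le> \<phi> z u) \<and> (\<forall>\<phi>\<in>Eqs. \<phi> z u = 0) \<and> (\<forall>C\<in>Cones. sholds C z u)"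
proof -
  have e: "(\<forall>\<phi>\<in>Eqs. 0 \<le> \<phi> z u) \<and> (\<forall>\<phi>\<in>Eqs. 0 \<le> - \<phi> z u) \<longleftrightarrow> (\<forall>\<phi>\<in>Eqs. \<phi> z u = 0)"
    by (auto intro: order.antisym)
  have L: "(\<forall>C\<in>Cs. sholds C z u) \<longleftrightarrow> (\<forall>\<phi>\<in>Ineqs. 0 \<le> \<phi> z u) \<and> ((\<forall>\<phi>\<in>Eqs. 0 \<le> \<phi> z u) \<and> (\<forall>\<phi>\<in>Eqs. 0 \<le> - \<phi> z u)) \<and> (\<forall>C\<in>Cones. sholds C z u)"
    unfolding Cs_def ball_Un Ball_image_comp o_def sholds_lin by (simp only: conj_assoc)
  show ?thesis unfolding L e ..
qed

lemma Cones_iff: "(\<forall>C\<in>Cones. sholds C z u) \<longleftrightarrow>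
   (\<forall>T\<in>Pow N. \<forall>p\<in>Lplus. (u (T,Some (Nd p)))\<^sup>2 \<le> u (T,None) * u (T,Some (Lp p)) \<and> 0 \<le> u (T,None) + u (T,Some (Lp p)))"
proof -
  have c4: "sqrt (4 * X\<^sup>2 + (L - Y)\<^sup>2) \<le> L + Y \<longleftrightarrow> X\<^sup>2 \<le> L * Y \<and> 0 \<le> L + Y" for X L Y :: real
    using cone_iff[of X L Y] by (simp add: power_mult_distrib)
  show ?thesis unfolding Cones_def by (simp add: sholds_def c4 ball_UN)
qed

lemma Cs_iff: "(\<forall>C\<in>Cs. sholds C z u) \<longleftrightarrow> Sem z u"
  unfolding Cs_split Cones_iff Sem_def Ineqs_def Eqs_def
  by (simp only: ball_Un ball_UN ball_simps right_minus_eq diff_ge_0_iff_ge simp_thms conj_assoc)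

lemma finA: "finite AA" using finN finI by simp

lemma I_mem: "Nd i \<in> I \<longleftrightarrow> i \<in> V" "Ed e \<in> I \<longleftrightarrow> e \<in> E" "Lp i \<in> I \<longleftrightarrow> i \<in> Lminus \<union> Lplus"
  unfolding coords_def by auto

lemmas aff_intros = aff_diff aff_add aff_neg aff_scale aff_sum aff_u aff_z aff_const

lemma AA_None: "T \<in> Pow N \<Longrightarrow> (T, None) \<in> AA" by simp
lemma AA_Some: "T \<in> Pow N \<Longrightarrow> c \<in> I \<Longrightarrow> (T, Some c) \<in> AA" by simp

lemma aff_Ineqs: "\<phi> \<in> Ineqs \<Longrightarrow> is_aff I AA \<phi>"
  unfolding Ineqs_def
proof (elim UnE UN_E insertE emptyE)
  fix T assume T: "T \<in> Pow N"
  fix p assume "p \<in> Lplus"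
  then have c: "Nd p \<in> I" using Lp_V by (auto simp: I_mem)
  assume "\<phi> = (\<lambda>z u. u (T, Some (Nd p)))" then show "is_aff I AA \<phi>"
    by (simp only:) (intro aff_intros finA AA_Some T c)
next
  fix T assume T: "T \<in> Pow N"
  fix p assume "p \<in> Lplus"
  then have c: "Nd p \<in> I" using Lp_V by (auto simp: I_mem)
  assume "\<phi> = (\<lambda>z u. u (T, None) - u (T, Some (Nd p)))" then show "is_aff I AA \<phi>"
    by (simp only:) (intro aff_intros finA AA_Some AA_None T c)
next
  fix T assume T: "T \<in> Pow N"
  fix n assume "n \<in> Lminus"
  then have c: "Lp n \<in> I" by (auto simp: I_mem)
  assume "\<phi> = (\<lambda>z u. of_bool (n \<in> T) * u (T, None) - u (T, Some (Lp n)))" then show "is_aff I AA \<phi>"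
    by (simp only:) (intro aff_intros finA AA_Some AA_None T c)
next
  fix T assume T: "T \<in> Pow N"
  assume "\<phi> = (\<lambda>z u. u (T, None))" then show "is_aff I AA \<phi>"
    by (simp only:) (intro aff_intros finA AA_Some AA_None T)
qed

lemma aff_Eqs: "\<phi> \<in> Eqs \<Longrightarrow> is_aff I AA \<phi>"
  unfolding Eqs_def
  by (elim UnE UN_E insertE emptyE CollectE; hypsubst;
      intro aff_intros finA finI finite_Pow_iff[THEN iffD2] finN AA_Some AA_None;
      use Lp_V in \<open>auto simp: I_mem\<close>)

lemma aff_Cones: "C \<in> Cones \<Longrightarrow> (\<forall>g\<in>set (fst C). is_aff I AA g) \<and> is_aff I AA (snd C)"
  unfolding Cones_def
  by (elim UnE UN_E insertE emptyE CollectE; hypsubst; simp only: fst_conv snd_conv list.set ball_simps;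
      intro conjI TrueI aff_intros finA finI AA_Some AA_None;
      use Lp_V in \<open>auto simp: I_mem\<close>)

lemma aff_all: "C \<in> Cs \<Longrightarrow> (\<forall>g\<in>set (fst C). is_aff I AA g) \<and> is_aff I AA (snd C)"
  unfolding Cs_def
proof (elim UnE)
  assume "C \<in> Pair [] ` Ineqs" then show ?thesis using aff_Ineqs by auto
next
  assume "C \<in> Pair [] ` Eqs" then show ?thesis using aff_Eqs by auto
next
  assume "C \<in> (\<lambda>\<phi>. ([], \<lambda>z u. - \<phi> z u)) ` Eqs" then show ?thesis using aff_neg[OF aff_Eqs] by auto
next
  assume "C \<in> Cones" then show ?thesis by (rule aff_Cones)
qed

end

lemma QP_setD:
  assumes "y \<in> QP_set V E Lminus Lplus"
  shows "supported_on (coords V E Lminus Lplus) y" "\<And>i. i \<in> V \<Longrightarrow> 0 \<le> y (Nd i)" "\<And>i. i \<in> V \<Longrightarrow> y (Nd i) \<le> 1"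
  using assms unfolding QP_set_def by simp_all

context qpG
begin

lemma QP_sub:
  assumes z: "z \<in> QP V E Lminus Lplus"
  shows "supported_on I z \<and> (\<exists>u. Sem z u)"
proof -
  have "\<exists>(n::nat) l x. (\<forall>t<n. 0 \<le> l t \<and> x t \<in> QP_set V E Lminus Lplus) \<and> (\<Sum>t<n. l t) = 1 \<and> z = (\<lambda>i. \<Sum>t<n. l t * x t i)"
    using z unfolding QP_def conv_hull_def mem_Collect_eq by simp
  then obtain n :: nat and l x where lx: "\<forall>t<n. 0 \<le> l t \<and> x t \<in> QP_set V E Lminus Lplus"
    and l1: "(\<Sum>t<n. l t) = 1" and zdef: "z = (\<lambda>i. \<Sum>t<n. l t * x t i)"
    by (elim exE conjE)
  have xQ: "x t \<in> QP_set V E Lminus Lplus" if "t < n" for t using lx that by blast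
  have l0: "0 \<le> l t" if "t < n" for t using lx that by blast
  have xV: "0 \<le> x t (Nd m) \<and> x t (Nd m) \<le> 1" if "t < n" "m \<in> V" for t m
    using QP_setD(2,3)[OF xQ[OF that(1)] that(2)] by simp
  have supp: "supported_on I z"
    unfolding supported_on_def zdef
  proof (intro allI impI)
    fix i assume "i \<notin> I"
    then have "x t i = 0" if "t < n" for t using QP_setD(1)[OF xQ[OF that]] unfolding supported_on_def by simp
    then show "(\<Sum>t<n. l t * x t i) = 0" by simp
  qed
  define W where "W T t = l t * pw N (\<lambda>m. x t (Nd m)) T" for T t
  define u where "u = (\<lambda>(T, oc). case oc of None \<Rightarrow> (\<Sum>t<n. W T t)
      | Some c \<Rightarrow> (\<Sum>t<n. W T t * vv N Lplus (x t) T c))"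
  have uN: "u (T, None) = (\<Sum>t<n. W T t)" for T by (simp add: u_def)
  have uS: "u (T, Some c) = (\<Sum>t<n. W T t * vv N Lplus (x t) T c)" for T c by (simp add: u_def)
  have W0: "0 \<le> W T t" if "T \<in> Pow N" "t < n" for T t
    unfolding W_def using that l0 xV by (intro mult_nonneg_nonneg pw_nonneg) auto
  have "Sem z u"
    unfolding Sem_def
  proof (intro conjI ballI)
    fix T assume T: "T \<in> Pow N"
    show "0 \<le> u (T, None)" unfolding uN using W0[OF T] by (intro sum_nonneg) auto
  next
    fix T p assume T: "T \<in> Pow N" and p: "p \<in> Lplus"
    have pV: "p \<in> V" using p Lp_V by blast
    show "0 \<le> u (T, Some (Nd p))" unfolding uS vv_Nd_P[OF p]
      using W0[OF T] xV[OF _ pV] by (intro sum_nonneg mult_nonneg_nonneg) auto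
    show "u (T, Some (Nd p)) \<le> u (T, None)" unfolding uS uN vv_Nd_P[OF p]
      using W0[OF T] xV[OF _ pV] by (intro sum_mono mult_left_le) auto
  next
    fix T n' assume T: "T \<in> Pow N" and n': "n' \<in> Lminus"
    have "u (T, Some (Lp n')) \<le> (\<Sum>t<n. W T t * of_bool (n' \<in> T))"
      unfolding uS using W0[OF T] vv_Lm[OF xQ n'] by (intro sum_mono mult_left_mono) auto
    then show "u (T, Some (Lp n')) \<le> of_bool (n' \<in> T) * u (T, None)"
      unfolding uN by (simp add: sum_distrib_left mult.commute)
  next
    have "(\<Sum>T\<in>Pow N. u (T, None)) = (\<Sum>t<n. l t * (\<Sum>T\<in>Pow N. pw N (\<lambda>m. x t (Nd m)) T))"
      unfolding uN W_def by (simp add: sum.swap[of _ "Pow N"] sum_distrib_left)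
    also have "\<dots> = 1" using l1 pw_sum1[OF finN] by simp
    finally show "(\<Sum>T\<in>Pow N. u (T, None)) = 1" .
  next
    fix c assume c: "c \<in> I"
    have "(\<Sum>T\<in>Pow N. u (T, Some c)) = (\<Sum>t<n. l t * (\<Sum>T\<in>Pow N. pw N (\<lambda>m. x t (Nd m)) T * vv N Lplus (x t) T c))"
      unfolding uS W_def by (simp add: sum.swap[of _ "Pow N"] sum_distrib_left mult.assoc)
    also have "\<dots> = (\<Sum>t<n. l t * x t c)" using vv_marg[OF xQ c] by simp
    finally show "z c = (\<Sum>T\<in>Pow N. u (T, Some c))" unfolding zdef by simp
  next
    fix T n' assume T: "T \<in> Pow N" and n': "n' \<in> N"
    show "u (T, Some (Nd n')) = of_bool (n' \<in> T) * u (T, None)"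
      unfolding uS uN vv_Nd_N[OF n'] by (simp add: sum_distrib_left mult.commute)
  next
    fix T e p assume T: "T \<in> Pow N" and e: "e \<in> E" and p: "p \<in> e \<inter> Lplus"
    show "u (T, Some (Ed e)) = of_bool (e - {p} \<subseteq> T) * u (T, Some (Nd p))"
      unfolding uS vv_Ed_P[OF e p] by (simp add: sum_distrib_left mult_ac)
  next
    fix T e assume T: "T \<in> Pow N" and e: "e \<in> {e \<in> E. e \<inter> Lplus = {}}"
    show "u (T, Some (Ed e)) = of_bool (e \<subseteq> T) * u (T, None)"
      using e unfolding uS uN by (simp add: vv_Ed_N sum_distrib_left mult.commute)
  next
    fix T p assume T: "T \<in> Pow N" and p: "p \<in> Lplus"
    have pV: "p \<in> V" using p Lp_V by blast
    have yy: "(x t (Nd p))\<^sup>2 \<le> x t (Lp p)" if "t < n" for t using vv_Lp(2)[OF xQ[OF that] p] .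
    have "0 \<le> u (T, None)" unfolding uN using W0[OF T] by (intro sum_nonneg) auto
    have vl: "vv N Lplus (x t) T (Lp p) = x t (Lp p)" if "t < n" for t using vv_Lp(1)[OF xQ[OF that] p] .
    have "(u (T, Some (Nd p)))\<^sup>2 \<le> u (T, None) * (\<Sum>t<n. W T t * (x t (Nd p))\<^sup>2)"
      unfolding uS uN vv_Nd_P[OF p] using W0[OF T] by (intro weighted_CS) auto
    also have "\<dots> \<le> u (T, None) * u (T, Some (Lp p))"
      unfolding uS
      using W0[OF T] yy \<open>0 \<le> u (T, None)\<close>
      by (intro mult_left_mono sum_mono) (auto intro: mult_left_mono simp: vl)
    finally show "(u (T, Some (Nd p)))\<^sup>2 \<le> u (T, None) * u (T, Some (Lp p))" .
    have "0 \<le> u (T, Some (Lp p))" unfolding uS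
      using W0[OF T] yy by (intro sum_nonneg mult_nonneg_nonneg) (auto intro: order_trans[OF zero_le_power2] simp: vl)
    then show "0 \<le> u (T, None) + u (T, Some (Lp p))" using \<open>0 \<le> u (T, None)\<close> by simp
  qed
  then show ?thesis using supp by blast
qed

end

lemma div_sq_le: fixes X L Y :: real assumes "0 < L" "X\<^sup>2 \<le> L * Y" shows "(X / L)\<^sup>2 \<le> Y / L"
proof -
  have "(X / L)\<^sup>2 = X\<^sup>2 / L\<^sup>2" by (simp add: power_divide)
  also have "\<dots> \<le> (L * Y) / L\<^sup>2" using assms by (intro divide_right_mono) auto
  also have "\<dots> = Y / L" using assms by (simp add: power2_eq_square)
  finally show ?thesis .
qed

context qpG
begin

lemma QP_sup:
  assumes supp: "supported_on I z" and S: "Sem z u"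
  shows "z \<in> QP V E Lminus Lplus"
proof -
  note S' = S[unfolded Sem_def]
  have s1': "\<forall>T\<in>Pow N. 0 \<le> u (T,None)" using S'[THEN conjunct1] .
  have s2': "\<forall>T\<in>Pow N. \<forall>p\<in>Lplus. 0 \<le> u (T,Some (Nd p)) \<and> u (T,Some (Nd p)) \<le> u (T,None)"
    using S'[THEN conjunct2, THEN conjunct1] .
  have s3': "\<forall>T\<in>Pow N. \<forall>n\<in>Lminus. u (T,Some (Lp n)) \<le> of_bool (n \<in> T) * u (T,None)"
    using S'[THEN conjunct2, THEN conjunct2, THEN conjunct1] .
  have s4: "(\<Sum>T\<in>Pow N. u (T,None)) = 1"
    using S'[THEN conjunct2, THEN conjunct2, THEN conjunct2, THEN conjunct1] .
  have s5': "\<forall>c\<in>I. z c = (\<Sum>T\<in>Pow N. u (T,Some c))"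
    using S'[THEN conjunct2, THEN conjunct2, THEN conjunct2, THEN conjunct2, THEN conjunct1] .
  have s6': "\<forall>T\<in>Pow N. \<forall>n\<in>N. u (T,Some (Nd n)) = of_bool (n \<in> T) * u (T,None)"
    using S'[THEN conjunct2, THEN conjunct2, THEN conjunct2, THEN conjunct2, THEN conjunct2, THEN conjunct1] .
  have s7': "\<forall>T\<in>Pow N. \<forall>e\<in>E. \<forall>p\<in>e \<inter> Lplus. u (T,Some (Ed e)) = of_bool (e - {p} \<subseteq> T) * u (T,Some (Nd p))"
    using S'[THEN conjunct2, THEN conjunct2, THEN conjunct2, THEN conjunct2, THEN conjunct2, THEN conjunct2, THEN conjunct1] .
  have s8': "\<forall>T\<in>Pow N. \<forall>e\<in>{e\<in>E. e \<inter> Lplus = {}}. u (T,Some (Ed e)) = of_bool (e \<subseteq> T) * u (T,None)"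
    using S'[THEN conjunct2, THEN conjunct2, THEN conjunct2, THEN conjunct2, THEN conjunct2, THEN conjunct2, THEN conjunct2, THEN conjunct1] .
  have s9': "\<forall>T\<in>Pow N. \<forall>p\<in>Lplus. (u (T,Some (Nd p)))\<^sup>2 \<le> u (T,None) * u (T,Some (Lp p)) \<and> 0 \<le> u (T,None) + u (T,Some (Lp p))"
    using S'[THEN conjunct2, THEN conjunct2, THEN conjunct2, THEN conjunct2, THEN conjunct2, THEN conjunct2, THEN conjunct2, THEN conjunct2] .
  have s1: "\<And>T. T \<in> Pow N \<Longrightarrow> 0 \<le> u (T,None)" using s1' by (rule bspec)
  have s2: "\<And>T p. T \<in> Pow N \<Longrightarrow> p \<in> Lplus \<Longrightarrow> 0 \<le> u (T,Some (Nd p)) \<and> u (T,Some (Nd p)) \<le> u (T,None)"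
    using s2' by blast
  have s3: "\<And>T n. T \<in> Pow N \<Longrightarrow> n \<in> Lminus \<Longrightarrow> u (T,Some (Lp n)) \<le> of_bool (n \<in> T) * u (T,None)"
    using s3' by blast
  have s5: "\<And>c. c \<in> I \<Longrightarrow> z c = (\<Sum>T\<in>Pow N. u (T,Some c))" using s5' by blast
  have s6: "\<And>T n. T \<in> Pow N \<Longrightarrow> n \<in> N \<Longrightarrow> u (T,Some (Nd n)) = of_bool (n \<in> T) * u (T,None)"
    using s6' by blast
  have s7: "\<And>T e p. T \<in> Pow N \<Longrightarrow> e \<in> E \<Longrightarrow> p \<in> e \<inter> Lplus \<Longrightarrow>
      u (T,Some (Ed e)) = of_bool (e - {p} \<subseteq> T) * u (T,Some (Nd p))"
    using s7' by blast
  have s8: "\<And>T e. T \<in> Pow N \<Longrightarrow> e \<in> E \<Longrightarrow> e \<inter> Lplus = {} \<Longrightarrow> u (T,Some (Ed e)) = of_bool (e \<subseteq> T) * u (T,None)"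
    using s8' by blast
  have s9: "\<And>T p. T \<in> Pow N \<Longrightarrow> p \<in> Lplus \<Longrightarrow> (u (T,Some (Nd p)))\<^sup>2 \<le> u (T,None) * u (T,Some (Lp p)) \<and> 0 \<le> u (T,None) + u (T,Some (Lp p))"
    using s9' by blast
  define L where "L T = u (T, None)" for T
  define U where "U T c = u (T, Some c)" for T c
  have "\<exists>T\<in>Pow N. 0 < L T"
  proof (rule ccontr)
    assume nT: "\<not> (\<exists>T\<in>Pow N. 0 < L T)"
    have "u (T, None) = 0" if "T \<in> Pow N" for T
    proof -
      have "\<not> 0 < L T" using nT that by blast
      then show ?thesis using s1[OF that] unfolding L_def by linarith
    qed
    then have "(\<Sum>T\<in>Pow N. u (T,None)) = 0" by simp
    then show False using s4 by simp
  qed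
  then obtain T0 where T0: "T0 \<in> Pow N" "0 < L T0" by blast
  define Z where "Z = {T \<in> Pow N. L T = 0}"
  define D where "D c = (\<Sum>T\<in>Z. U T c)" for c
  have finPN: "finite (Pow N)" using finN by simp
  have finZ: "finite Z" unfolding Z_def using finPN by simp
  have ZD: "T \<in> Pow N" "u (T, None) = 0" if "T \<in> Z" for T using that unfolding Z_def L_def by simp_all
  have zNd: "U T (Nd i) = 0" if "T \<in> Z" "i \<in> V" for T i
  proof (cases "i \<in> Lplus")
    case True
    have "0 \<le> u (T,Some (Nd i))" "u (T,Some (Nd i)) \<le> u (T,None)" using s2[OF ZD(1)[OF that(1)] True] by simp_all
    then show ?thesis using ZD(2)[OF that(1)] unfolding U_def by linarith
  next
    case False
    then have "i \<in> N" using that(2) by simp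
    then show ?thesis using s6[OF ZD(1)[OF that(1)]] ZD(2)[OF that(1)] unfolding U_def by simp
  qed
  have zEd: "U T (Ed e) = 0" if "T \<in> Z" "e \<in> E" for T e
  proof (cases "e \<inter> Lplus = {}")
    case True then show ?thesis using s8[OF ZD(1)[OF that(1)] that(2) True] ZD(2)[OF that(1)] unfolding U_def by simp
  next
    case False
    then obtain p where p: "p \<in> e \<inter> Lplus" by blast
    then have "p \<in> V" using Lp_V by blast
    then have "U T (Nd p) = 0" using zNd that(1) by blast
    then show ?thesis using s7[OF ZD(1)[OF that(1)] that(2) p] unfolding U_def by simp
  qed
  have zLm: "U T (Lp n) \<le> 0" if "T \<in> Z" "n \<in> Lminus" for T n
    using s3[OF ZD(1)[OF that(1)] that(2)] ZD(2)[OF that(1)] unfolding U_def by simp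
  have zLp: "0 \<le> U T (Lp p)" if "T \<in> Z" "p \<in> Lplus" for T p
    using s9[OF ZD(1)[OF that(1)] that(2)] ZD(2)[OF that(1)] unfolding U_def by simp
  have DNd: "D (Nd i) = 0" if "i \<in> V" for i unfolding D_def using zNd that by simp
  have DEd: "D (Ed e) = 0" if "e \<in> E" for e unfolding D_def using zEd that by simp
  have DLm: "D (Lp n) \<le> 0" if "n \<in> Lminus" for n unfolding D_def using zLm that by (intro sum_nonpos) auto
  have DLp: "0 \<le> D (Lp p)" if "p \<in> Lplus" for p unfolding D_def using zLp that by (intro sum_nonneg) auto
  define pt where "pt T c = (if c \<in> I then (if 0 < L T then U T c / L T else 0) + (if T = T0 then D c / L T0 else 0) else 0)" for T c
  have ptQ: "pt T \<in> QP_set V E Lminus Lplus" if T: "T \<in> Pow N" for T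
  proof (cases "0 < L T")
    case False
    then have "T \<noteq> T0" using T0 by blast
    then have "pt T = (\<lambda>_. 0)" using False unfolding pt_def by (auto simp: fun_eq_iff)
    then show ?thesis unfolding QP_set_def supported_on_def by simp
  next
    case pos: True
    have pNd: "pt T (Nd i) = U T (Nd i) / L T" if "i \<in> V" for i
      using that pos DNd unfolding pt_def by (simp add: I_mem)
    have pEd: "pt T (Ed e) = U T (Ed e) / L T" if "e \<in> E" for e
      using that pos DEd unfolding pt_def by (simp add: I_mem)
    have pLm: "pt T (Lp n) \<le> U T (Lp n) / L T" if "n \<in> Lminus" for n
      using that pos DLm[OF that] T0 unfolding pt_def by (auto simp: I_mem intro: divide_nonpos_pos)
    have pLp: "U T (Lp p) / L T \<le> pt T (Lp p)" if "p \<in> Lplus" for p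
      using that pos DLp[OF that] T0 unfolding pt_def by (auto simp: I_mem)
    have pN: "pt T (Nd n) = of_bool (n \<in> T)" if "n \<in> N" for n
      using pNd[of n] s6[OF T that] that pos unfolding U_def L_def by simp
    show ?thesis
      unfolding QP_set_def mem_Collect_eq
    proof (intro conjI ballI allI impI)
      show "supported_on I (pt T)" unfolding supported_on_def pt_def by simp
    next
      fix p assume p: "p \<in> Lplus"
      have pV: "p \<in> V" using p Lp_V by blast
      have "(pt T (Nd p))\<^sup>2 \<le> U T (Lp p) / L T"
        unfolding pNd[OF pV] using s9[OF T p] pos unfolding U_def L_def by (intro div_sq_le) auto
      then show "(pt T (Nd p))\<^sup>2 \<le> pt T (Lp p)" using pLp[OF p] by linarith
    next
      fix n assume n: "n \<in> Lminus"
      have nN: "n \<in> N" using n Lm_N by blast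
      have "U T (Lp n) / L T \<le> of_bool (n \<in> T)"
        using s3[OF T n] pos unfolding U_def L_def by (simp add: divide_le_eq)
      moreover have "(pt T (Nd n))\<^sup>2 = of_bool (n \<in> T)" using pN[OF nN] by simp
      ultimately show "pt T (Lp n) \<le> (pt T (Nd n))\<^sup>2" using pLm[OF n] by linarith
    next
      fix e i j assume e: "e \<in> E" and eij: "e = {i, j} \<and> i \<noteq> j"
      have ij: "i \<in> V" "j \<in> V" using edge_V e eij by blast+
      show "pt T (Ed e) = pt T (Nd i) * pt T (Nd j)"
      proof (cases "i \<in> Lplus")
        case True
        then have jN: "j \<notin> Lplus" using stab[of i j] e eij by blast
        have "e - {i} = {j}" using eij by blast
        then have "U T (Ed e) = of_bool (j \<in> T) * U T (Nd i)"
          using s7[OF T e, of i] True eij unfolding U_def by simp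
        then show ?thesis using pEd[OF e] pNd[OF ij(1)] pN[of j] jN ij by simp
      next
        case iN: False
        show ?thesis
        proof (cases "j \<in> Lplus")
          case True
          have "e - {j} = {i}" using eij by blast
          then have "U T (Ed e) = of_bool (i \<in> T) * U T (Nd j)"
            using s7[OF T e, of j] True eij unfolding U_def by simp
          then show ?thesis using pEd[OF e] pNd[OF ij(2)] pN[of i] iN ij by simp
        next
          case False
          then have "e \<inter> Lplus = {}" using iN eij by blast
          then have "U T (Ed e) = of_bool ({i,j} \<subseteq> T) * L T"
            using s8[OF T e] eij unfolding U_def L_def by simp
          then show ?thesis using pEd[OF e] pN[of i] pN[of j] iN False ij pos by simp
        qed
      qed
    next
      fix i assume i: "i \<in> V"
      show "0 \<le> pt T (Nd i)"
      proof (cases "i \<in> Lplus")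
        case True then show ?thesis using pNd[OF i] s2[OF T True] pos unfolding U_def L_def by simp
      next
        case False then show ?thesis using pN[of i] i by simp
      qed
      show "pt T (Nd i) \<le> 1"
      proof (cases "i \<in> Lplus")
        case True then show ?thesis using pNd[OF i] s2[OF T True] pos unfolding U_def L_def by simp
      next
        case False then show ?thesis using pN[of i] i by simp
      qed
    qed
  qed
  obtain h where h: "bij_betw h {0..<card (Pow N)} (Pow N)" using ex_bij_betw_nat_finite[OF finPN] by blast
  have reidx: "(\<Sum>j<card (Pow N). f (h j)) = (\<Sum>T\<in>Pow N. f T)" for f :: "'v set \<Rightarrow> real"
    using sum.reindex_bij_betw[OF h, of f] by (simp add: lessThan_atLeast0)
  have hin: "h j \<in> Pow N" if "j < card (Pow N)" for j using h that unfolding bij_betw_def by auto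
  have comb: "z c = (\<Sum>T\<in>Pow N. L T * pt T c)" for c
  proof (cases "c \<in> I")
    case False then show ?thesis using supp unfolding supported_on_def pt_def by simp
  next
    case True
    have pw: "L T * pt T c = (if 0 < L T then U T c else 0) + (if T = T0 then D c else 0)" if "T \<in> Pow N" for T
      using True T0 s1[OF that] unfolding pt_def L_def by (auto simp: field_simps)
    have DZ: "D c = (\<Sum>T\<in>Pow N. if L T = 0 then U T c else 0)"
      unfolding D_def Z_def by (rule sum.inter_filter[OF finPN])
    have "(\<Sum>T\<in>Pow N. L T * pt T c) = (\<Sum>T\<in>Pow N. if 0 < L T then U T c else 0) + D c"
      using pw T0(1) finPN by (simp add: sum.distrib)
    also have "\<dots> = (\<Sum>T\<in>Pow N. (if 0 < L T then U T c else 0) + (if L T = 0 then U T c else 0))"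
      unfolding DZ by (simp add: sum.distrib)
    also have "\<dots> = (\<Sum>T\<in>Pow N. U T c)"
      using s1 unfolding L_def by (intro sum.cong) (auto simp: less_le)
    finally show ?thesis using s5[OF True] unfolding U_def by simp
  qed
  show ?thesis
    unfolding QP_def conv_hull_def mem_Collect_eq
  proof (intro exI conjI allI impI)
    fix j assume j: "j < card (Pow N)"
    show "0 \<le> L (h j)" using s1[OF hin[OF j]] unfolding L_def .
    show "pt (h j) \<in> QP_set V E Lminus Lplus" using ptQ[OF hin[OF j]] .
  next
    show "(\<Sum>j<card (Pow N). L (h j)) = 1" using reidx[of L] s4 unfolding L_def by simp
  next
    show "z = (\<lambda>c. \<Sum>j<card (Pow N). L (h j) * pt (h j) c)"
    proof (rule ext)
      fix c
      have "(\<Sum>j<card (Pow N). L (h j) * pt (h j) c) = (\<Sum>T\<in>Pow N. L T * pt T c)"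
        by (rule reidx[of "\<lambda>T. L T * pt T c"])
      then show "z c = (\<Sum>j<card (Pow N). L (h j) * pt (h j) c)" using comb[of c] by simp
    qed
  qed
qed

end

context qpG
begin
lemma finCs: "finite Cs"
  unfolding Cs_def Ineqs_def Eqs_def Cones_def
  using finN finI finE finite_subset[OF Lp_V finV] finite_subset[OF gr(3) finV] by simp
end

theorem theorem2:
  fixes V :: "'v set" and E :: "'v set set" and Lminus Lplus :: "'v set"
  assumes "graph_with_loops V E Lminus Lplus"
    and "stable_set V E Lplus"
  shows "soc_representable (coords V E Lminus Lplus) (QP V E Lminus Lplus)"
proof -
  interpret G: qpG V E Lminus Lplus using assms by unfold_locales
  have eq: "QP V E Lminus Lplus = {z. supported_on G.I z \<and> (\<exists>u. \<forall>C\<in>G.Cs. sholds C z u)}"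
    unfolding G.Cs_iff using G.QP_sub G.QP_sup by blast
  show ?thesis unfolding eq by (rule transfer_rep[OF G.finI G.finA G.finCs G.aff_all])
qed

end
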